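(* For every pair of positive integers $l$ and $r$, there exists a graph $G$ of order $lr$ that admits a regular distance $l$-labeling of degree $r$.
   Context: All graphs are finite and simple; $d(u,v)$ denotes the usual graph distance. For integers $m\le n$, $[m,n]=\{m,m+1,\ldots,n\}$. For a graph $G$ and a positive integer $l$, a distance $l$-labeling of $G$ is a function $f:V(G)\to[0,l]$ such that (i) $f(V(G))=[0,l]$ or $f(V(G))=[1,l]$, and (ii) whenever two distinct vertices $u,v$ satisfy $f(u)=f(v)=k$, we have $d(u,v)=k$. A distance $l$-labeling is regular of degree $r$ if for every $k\in[1,l]$ there are exactly $r$ vertices labeled $k$. *)

theory Defs
  imports Main "HOL-Library.Extended_Nat"
begin

definition simple_graph :: "'a set \<Rightarrow> ('a \<Rightarrow> 'a \<Rightarrow> bool) \<Rightarrow> bool" where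
  "simple_graph V E \<longleftrightarrow> finite V
     \<and> (\<forall>u v. E u v \<longrightarrow> u \<in> V \<and> v \<in> V)
     \<and> (\<forall>u v. E u v \<longrightarrow> E v u)
     \<and> (\<forall>u. \<not> E u u)"

inductive walk :: "('a \<Rightarrow> 'a \<Rightarrow> bool) \<Rightarrow> 'a \<Rightarrow> 'a \<Rightarrow> nat \<Rightarrow> bool" for E where
  walk_nil: "walk E u u 0"
| walk_cons: "E u w \<Longrightarrow> walk E w v n \<Longrightarrow> walk E u v (Suc n)"

definition gdist :: "('a \<Rightarrow> 'a \<Rightarrow> bool) \<Rightarrow> 'a \<Rightarrow> 'a \<Rightarrow> enat" where
  "gdist E u v = (if \<exists>n. walk E u v n then enat (LEAST n. walk E u v n) else \<infinity>)"

definition distance_labeling ::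
  "'a set \<Rightarrow> ('a \<Rightarrow> 'a \<Rightarrow> bool) \<Rightarrow> nat \<Rightarrow> ('a \<Rightarrow> nat) \<Rightarrow> bool" where
  "distance_labeling V E l f \<longleftrightarrow>
     (f ` V = {0..l} \<or> f ` V = {1..l})
     \<and> (\<forall>u\<in>V. \<forall>v\<in>V. u \<noteq> v \<longrightarrow> f u = f v \<longrightarrow> gdist E u v = enat (f u))"

definition regular_distance_labeling ::
  "'a set \<Rightarrow> ('a \<Rightarrow> 'a \<Rightarrow> bool) \<Rightarrow> nat \<Rightarrow> nat \<Rightarrow> ('a \<Rightarrow> nat) \<Rightarrow> bool" where
  "regular_distance_labeling V E l r f \<longleftrightarrow>
     distance_labeling V E l f \<and> (\<forall>k\<in>{1..l}. card {v\<in>V. f v = k} = r)"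

end

theory Submission
  imports Defs
begin

lemma walk_append: "walk E u w a \<Longrightarrow> walk E w v b \<Longrightarrow> walk E u v (a + b)"
  by (induction rule: walk.induct) (auto intro: walk.intros)

lemma walk_snoc: "walk E u w a \<Longrightarrow> E w v \<Longrightarrow> walk E u v (Suc a)"
  using walk_append[of E u w a v 1] by (simp add: walk.intros)

lemma walk_rev: "walk E u v n \<Longrightarrow> (\<And>a b. E a b \<Longrightarrow> E b a) \<Longrightarrow> walk E v u n"
proof (induction rule: walk.induct)
  case (walk_nil u) show ?case by (rule walk.walk_nil)
next
  case (walk_cons u w v n)
  then show ?case using walk_snoc by metis
qed

lemma walk_pot:
  fixes \<phi> :: "'a \<Rightarrow> int"
  assumes "walk E u v n" "\<And>a b. E a b \<Longrightarrow> \<phi> b \<le> \<phi> a + 1"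
  shows "\<phi> v \<le> \<phi> u + int n"
  using assms(1)
proof (induction rule: walk.induct)
  case (walk_cons u w v n)
  then show ?case using assms(2)[of u w] by simp
qed simp

lemma gdist_eq:
  assumes "walk E u v k" "\<And>n. walk E u v n \<Longrightarrow> k \<le> n"
  shows "gdist E u v = enat k"
proof -
  have "(LEAST n. walk E u v n) = k"
    by (rule Least_equality) (use assms in auto)
  then show ?thesis using assms unfolding gdist_def by auto
qed

definition EE :: "nat \<Rightarrow> nat \<Rightarrow> nat \<Rightarrow> nat \<Rightarrow> bool" where
  "EE l r u v \<longleftrightarrow> u < l*r \<and> v < l*r \<and> u \<noteq> v \<and> (
     (u div r = 0 \<and> v div r = 0) \<or>
     (u mod r = v mod r \<and> (v div r = u div r + 2 \<or> u div r = v div r + 2)) \<or>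
     (u = 0 \<and> v div r = 1) \<or> (v = 0 \<and> u div r = 1))"

lemma EE_sym: "EE l r u v \<Longrightarrow> EE l r v u"
  unfolding EE_def by auto

definition phiO :: "nat \<Rightarrow> nat \<Rightarrow> nat \<Rightarrow> int" where
  "phiO r i0 x = (let q = x div r; i = x mod r in
     if even q then (if i = i0 then - int (q div 2) else int (q div 2) + 1)
     else int ((q+1) div 2) + (if i0 = 0 then 0 else 1))"

definition phiE :: "nat \<Rightarrow> nat \<Rightarrow> nat \<Rightarrow> int" where
  "phiE r i0 x = (let q = x div r; i = x mod r in
     if odd q then (if i = i0 then - int ((q+1) div 2) else int ((q+1) div 2)) else 0)"

lemma EE_cases:
  assumes "EE l r a b"
  shows "(a div r = 0 \<and> b div r = 0 \<and> a mod r \<noteq> b mod r) \<or>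
     (a mod r = b mod r \<and> (b div r = a div r + 2 \<or> a div r = b div r + 2)) \<or>
     (a div r = 0 \<and> a mod r = 0 \<and> b div r = 1) \<or> (b div r = 0 \<and> b mod r = 0 \<and> a div r = 1)"
proof -
  have "a = a div r * r + a mod r" "b = b div r * r + b mod r" by simp_all
  then show ?thesis using assms unfolding EE_def by (metis div_0 mod_0)
qed

lemma phiO_edge: "EE l r a b \<Longrightarrow> phiO r i0 b \<le> phiO r i0 a + 1"
  unfolding phiO_def Let_def
  apply (drule EE_cases)
  apply (elim conjE disjE)
  by auto

lemma phiE_edge: "EE l r a b \<Longrightarrow> phiE r i0 b \<le> phiE r i0 a + 1"
  unfolding phiE_def Let_def
  apply (drule EE_cases)
  apply (elim conjE disjE)
  by auto


lemma divmod_eq: "i < (r::nat) \<Longrightarrow> (q*r+i) div r = q \<and> (q*r+i) mod r = i"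
  by auto

lemma EE_chainI: "a < l*r \<Longrightarrow> b < l*r \<Longrightarrow> a div r = q \<Longrightarrow> b div r = q+2 \<Longrightarrow> a mod r = b mod r \<Longrightarrow> EE l r a b"
  unfolding EE_def by auto

lemma chain: "i < r \<Longrightarrow> q + 2*t < l \<Longrightarrow> walk (EE l r) (q*r+i) ((q+2*t)*r+i) t"
proof (induction t arbitrary: q)
  case 0 then show ?case by (simp add: walk.walk_nil)
next
  case (Suc t)
  have e: "EE l r (q*r+i) ((q+2)*r+i)"
  proof -
    have "(q+2)*r+i < l*r"
    proof -
      have "(q+2)*r + i < (q+2)*r + r" using Suc by simp
      also have "\<dots> = (q+3)*r" by (simp add: algebra_simps)
      also have "\<dots> \<le> l*r" using Suc by (intro mult_right_mono) auto
      finally show ?thesis .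
    qed
    moreover have "q*r+i < (q+2)*r+i" using Suc by simp
    ultimately show ?thesis using divmod_eq[OF Suc(2), of q] divmod_eq[OF Suc(2), of "q+2"]
      by (intro EE_chainI[where q=q]) (auto simp del: add_mult_distrib distrib_right)
  qed
  have "walk (EE l r) ((q+2)*r+i) ((q+2+2*t)*r+i) t" using Suc.IH[of "q+2"] Suc.prems by simp
  then have "walk (EE l r) (q*r+i) ((q+2+2*t)*r+i) (Suc t)" by (rule walk.walk_cons[where E="EE l r", OF e])
  then show ?case by (simp add: algebra_simps)
qed

theorem mainTheorem5:
  fixes l r :: nat
  assumes "l > 0" and "r > 0"
  shows "\<exists>(V :: nat set) E f. simple_graph V E \<and> card V = l * r
           \<and> regular_distance_labeling V E l r f"
proof (intro exI conjI)
  let ?V = "{0..<l*r}"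
  let ?f = "\<lambda>v. v div r + 1"
  have sym: "\<And>a b. EE l r a b \<Longrightarrow> EE l r b a" by (rule EE_sym)
  show "simple_graph ?V (EE l r)" unfolding simple_graph_def EE_def by auto
  show "card ?V = l * r" by simp
  show "regular_distance_labeling ?V (EE l r) l r ?f"
    unfolding regular_distance_labeling_def distance_labeling_def
  proof (intro conjI ballI impI)
    have "?f ` ?V = {1..l}"
    proof
      show "?f ` ?V \<subseteq> {1..l}"
        by (auto simp: less_mult_imp_div_less Suc_leI)
      show "{1..l} \<subseteq> ?f ` ?V"
      proof
        fix k assume k: "k \<in> {1..l}"
        have "(k-1)*r < l*r" using k assms by auto
        moreover have "?f ((k-1)*r) = k" using k assms by auto
        ultimately show "k \<in> ?f ` ?V" by (metis atLeastLessThan_iff image_eqI zero_le)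
      qed
    qed
    then show "?f ` ?V = {0..l} \<or> ?f ` ?V = {1..l}" by simp
  next
    fix k assume k: "k \<in> {1..l}"
    have "{v \<in> ?V. ?f v = k} = {(k-1)*r..<(k-1)*r + r}"
    proof (intro set_eqI iffI)
      fix v assume "v \<in> {v \<in> ?V. ?f v = k}"
      then have "v div r = k - 1" by auto
      then show "v \<in> {(k-1)*r..<(k-1)*r + r}" using assms
        by (metis atLeastLessThan_iff add.commute div_mult_mod_eq mod_less_divisor
            nat_add_left_cancel_less le_add2)
    next
      fix v assume v: "v \<in> {(k-1)*r..<(k-1)*r + r}"
      then obtain i where i: "v = (k-1)*r + i" "i < r"
        by (metis atLeastLessThan_iff le_Suc_ex nat_add_left_cancel_less)
      then have "v div r = k - 1" using divmod_eq[of i r "k-1"] by (simp add: mult.commute)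
      moreover have "v < l*r"
      proof -
        have "v < (k-1)*r + r" using i by simp
        also have "\<dots> = k*r" using k by (cases k) auto
        also have "\<dots> \<le> l*r" using k by auto
        finally show ?thesis .
      qed
      ultimately show "v \<in> {v \<in> ?V. ?f v = k}" using k by auto
    qed
    then show "card {v \<in> ?V. ?f v = k} = r" by simp
  next
    fix u v assume u: "u \<in> ?V" and v: "v \<in> ?V" and ne: "u \<noteq> v" and eq: "?f u = ?f v"
    define q where "q = u div r"
    define iu where "iu = u mod r"
    define iv where "iv = v mod r"
    have qv: "v div r = q" using eq q_def by simp
    have uq: "u = q*r+iu" unfolding q_def iu_def by simp
    have vq: "v = q*r+iv" using qv unfolding iv_def by (metis div_mult_mod_eq)
    have ne': "iu \<noteq> iv" using ne uq vq by auto
    have iur: "iu < r" "iv < r" unfolding iu_def iv_def using assms by auto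
    have ql: "q < l" using u q_def by (simp add: less_mult_imp_div_less)
    show "gdist (EE l r) u v = enat (?f u)"
    proof (cases "even q")
      case True
      then obtain m where m: "q = 2*m" by auto
      have w1: "walk (EE l r) u (0*r+iu) m"
        using walk_rev[OF chain[of iu r 0 m l] sym] iur ql m uq by simp
      have rl: "r \<le> l*r" using assms by simp
      have "iu < l*r" "iv < l*r" using rl iur by linarith+
      then have e: "EE l r (0*r+iu) (0*r+iv)" unfolding EE_def using iur ne' 
        by (simp add: divmod_eq)
      have w2: "walk (EE l r) (0*r+iv) v m" using chain[of iv r 0 m l] iur ql m vq by simp
      have W: "walk (EE l r) u v (Suc (2*m))"
        using walk_append[OF w1 walk.walk_cons[OF e w2]] by (simp add: mult_2)
      have lb: "Suc (2*m) \<le> n" if "walk (EE l r) u v n" for n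
      proof -
        have "phiO r iu v \<le> phiO r iu u + int n"
          by (rule walk_pot[OF that]) (rule phiO_edge)
        moreover have "phiO r iu u = - int m" unfolding phiO_def Let_def using m iu_def q_def by simp
        moreover have "phiO r iu v = int m + 1" unfolding phiO_def Let_def using m ne' iv_def qv by simp
        ultimately show ?thesis by linarith
      qed
      show ?thesis using gdist_eq[OF W lb] m q_def by simp
    next
      case False
      then obtain m where m: "q = 2*m+1" by (metis oddE)
      have w1: "walk (EE l r) u (1*r+iu) m"
        using walk_rev[OF chain[of iu r 1 m l] sym] iur ql m uq by simp
      have r2: "2*r \<le> l*r" using ql m by (intro mult_right_mono) auto
      have d1: "(r+iu) div r = 1" "(r+iv) div r = 1" using divmod_eq[of iu r 1] divmod_eq[of iv r 1] iur by simp_all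
      have lt: "r+iu < l*r" "r+iv < l*r" using iur r2 by linarith+
      have e1: "EE l r (1*r+iu) 0" unfolding EE_def using iur assms lt d1 by simp
      have e2: "EE l r 0 (1*r+iv)" unfolding EE_def using iur assms lt d1 by simp
      have w2: "walk (EE l r) (1*r+iv) v m" using chain[of iv r 1 m l] iur ql m vq by simp
      have W: "walk (EE l r) u v (Suc (Suc (2*m)))"
        using walk_append[OF w1 walk.walk_cons[OF e1 walk.walk_cons[OF e2 w2]]] by (simp add: mult_2)
      have lb: "Suc (Suc (2*m)) \<le> n" if "walk (EE l r) u v n" for n
      proof -
        have "phiE r iu v \<le> phiE r iu u + int n"
          by (rule walk_pot[OF that]) (rule phiE_edge)
        moreover have "phiE r iu u = - int m - 1" unfolding phiE_def Let_def using m iu_def q_def by simp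
        moreover have "phiE r iu v = int m + 1" unfolding phiE_def Let_def using m ne' iv_def qv by simp
        ultimately show ?thesis by linarith
      qed
      show ?thesis using gdist_eq[OF W lb] m q_def by simp
    qed
  qed
qed

end
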